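(* Let $f$ satisfy conditions (1) and (2a), let $a,p>0$ and $x,y\in\mathbb{R}$. In the expression \[ a\,e^{-p(x^2+y^2)}\int_0^\infty\!\!\int_0^{2\pi} f(r')\,e^{-pr'^2}\sum_{n=0}^\infty(2p)^n\sum_{i=0}^n\frac{x^{n-i}y^i}{(n-i)!\,i!}\,r'^n\cos^{n-i}\varphi'\sin^i\varphi'\;r'\,d\varphi'\,dr' \] the order of summation and integration may be reversed, for arbitrary values of $p$ and $r=\sqrt{x^2+y^2}$.
   Context: $f:[0,\infty)\to\mathbb{R}$; $c_n=2\pi\int_0^\infty f(r)\,r^{n+1}dr$. Condition (1): there is a constant $F$ with $0\le f(r)\le F$ for all $r\ge0$, $c_0$ exists and $c_0>0$. Condition (2a): $c_{2n}$ exists for all $n\in\mathbb{N}_0$ and $c_n^{1/n}=o(n)$ as $n\to\infty$. *)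

theory Defs
  imports "HOL-Analysis.Analysis" "HOL-Library.Landau_Symbols"
begin

definition moment :: "(real \<Rightarrow> real) \<Rightarrow> nat \<Rightarrow> real" where
  "moment f n = 2 * pi * (LINT r:{0..}|lborel. f r * r ^ (n + 1))"

definition cond1 :: "(real \<Rightarrow> real) \<Rightarrow> bool" where
  "cond1 f \<longleftrightarrow> (\<exists>F. \<forall>r\<ge>0. 0 \<le> f r \<and> f r \<le> F)
     \<and> set_integrable lborel {0..} (\<lambda>r. f r * r) \<and> moment f 0 > 0"

definition cond2a :: "(real \<Rightarrow> real) \<Rightarrow> bool" where
  "cond2a f \<longleftrightarrow> (\<forall>n. set_integrable lborel {0..} (\<lambda>r. f r * r ^ (2 * n + 1)))
     \<and> (\<lambda>n. moment f n powr (1 / real n)) \<in> o(\<lambda>n. real n)"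

text \<open>The n-th term of the series in the integrand (including the area element r').\<close>
definition series_term :: "(real \<Rightarrow> real) \<Rightarrow> real \<Rightarrow> real \<Rightarrow> real \<Rightarrow> nat \<Rightarrow> real \<Rightarrow> real \<Rightarrow> real" where
  "series_term f p x y n r \<phi> =
     f r * exp (- p * r\<^sup>2) * ((2 * p) ^ n *
       (\<Sum>i\<le>n. x ^ (n - i) * y ^ i / (fact (n - i) * fact i) * r ^ n * cos \<phi> ^ (n - i) * sin \<phi> ^ i))
     * r"

definition iter_int :: "(real \<Rightarrow> real \<Rightarrow> real) \<Rightarrow> real" where
  "iter_int g = (LINT r:{0..}|lborel. (LINT \<phi>:{0..2*pi}|lborel. g r \<phi>))"

end

theory Submission
  imports Defs "HOL-Probability.Sinc_Integral"
begin

lemma term_eq: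
  "series_term f p x y n r \<phi> = f r * exp (- p * r\<^sup>2) * r * ((2*p*r*(x * cos \<phi> + y * sin \<phi>))^n / fact n)"
proof -
  have b: "(x * cos \<phi> + y * sin \<phi>)^n = (\<Sum>k\<le>n. of_nat (n choose k) * (y * sin \<phi>)^k * (x * cos \<phi>)^(n-k))"
    using binomial_ring[of "y * sin \<phi>" "x * cos \<phi>" n] by (simp add: add.commute)
  have eq: "(2*p*r)^n * (of_nat (n choose k) * (y * sin \<phi>)^k * (x * cos \<phi>)^(n-k)) / fact n
     = (2*p)^n * (x^(n-k)*y^k/(fact (n-k)*fact k) * r^n * cos \<phi>^(n-k) * sin \<phi>^k)" if "k \<le> n" for k
    using binomial_fact[OF that, where 'a=real] by (simp add: power_mult_distrib field_simps)
  have "(2*p*r*(x * cos \<phi> + y * sin \<phi>))^n / fact n = (\<Sum>k\<le>n. (2*p*r)^n * (of_nat (n choose k) * (y * sin \<phi>)^k * (x * cos \<phi>)^(n-k)) / fact n)"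
    unfolding power_mult_distrib[of "2*p*r"] b by (simp add: sum_distrib_left sum_divide_distrib)
  also have "\<dots> = (2*p)^n * (\<Sum>k\<le>n. x^(n-k)*y^k/(fact (n-k)*fact k) * r^n * cos \<phi>^(n-k) * sin \<phi>^k)"
    by (simp add: eq sum_distrib_left)
  finally show ?thesis unfolding series_term_def by simp
qed

lemma core:
  fixes p r v F t K :: real
  assumes "p > 0" "r \<ge> 0" "0 \<le> v" "v \<le> F" "\<bar>t\<bar> \<le> 2*p*K*r"
  shows "v * exp (- p * r\<^sup>2) * r * exp \<bar>t\<bar> \<le> F * exp ((2*p*K+2)\<^sup>2/(4*p)) * exp (- r)"
proof -
  have r: "r \<le> exp r" using exp_ge_add_one_self[of r] by linarith
  have "v * exp (- p * r\<^sup>2) * r * exp \<bar>t\<bar> \<le> F * exp (- p * r\<^sup>2) * exp r * exp (2*p*K*r)"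
    using assms r by (intro mult_mono) auto
  also have "\<dots> = F * exp (- p * r\<^sup>2 + r + 2*p*K*r)" by (simp add: exp_add[symmetric] mult.assoc)
  also have "\<dots> \<le> F * exp ((2*p*K+2)\<^sup>2/(4*p) - r)"
  proof -
    have "0 \<le> p * (r - (2*p*K+2)/(2*p))\<^sup>2" using assms by simp
    also have "p * (r - (2*p*K+2)/(2*p))\<^sup>2 = p*r\<^sup>2 - (2*p*K+2)*r + (2*p*K+2)\<^sup>2/(4*p)"
      using assms by (simp add: power2_eq_square field_simps)
    finally have "- p * r\<^sup>2 + r + 2*p*K*r \<le> (2*p*K+2)\<^sup>2/(4*p) - r" by (simp add: algebra_simps)
    moreover have "F \<ge> 0" using assms by simp
    ultimately show ?thesis by (intro mult_left_mono) auto
  qed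
  also have "\<dots> = F * exp ((2*p*K+2)\<^sup>2/(4*p)) * exp (- r)" by (simp add: exp_diff exp_minus field_simps)
  finally show ?thesis .
qed


lemma iter_int_eq:
  fixes g :: "real \<Rightarrow> real \<Rightarrow> real"
  assumes "integrable (lborel \<Otimes>\<^sub>M lborel)
     (\<lambda>z. indicator {0..} (fst z) * indicator {0..2*pi} (snd z) * g (fst z) (snd z))"
  shows "iter_int g = (\<integral>z. indicator {0..} (fst z) * indicator {0..2*pi} (snd z) * g (fst z) (snd z) \<partial>(lborel \<Otimes>\<^sub>M lborel))"
proof -
  have "iter_int g = (\<integral>r. (\<integral>\<phi>. indicator {0..} r * indicator {0..2*pi} \<phi> * g r \<phi> \<partial>lborel) \<partial>lborel)"
    unfolding iter_int_def set_lebesgue_integral_def by (simp add: mult.assoc)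
  also have "(\<integral>r. (\<integral>\<phi>. indicator {0..} r * indicator {0..2*pi} \<phi> * g r \<phi> \<partial>lborel) \<partial>lborel)
     = (\<integral>z. indicator {0..} (fst z) * indicator {0..2*pi} (snd z) * g (fst z) (snd z) \<partial>(lborel \<Otimes>\<^sub>M lborel))"
    using lborel_pair.integral_fst'[OF assms] by simp
  finally show ?thesis .
qed


theorem lemma5:
  fixes f :: "real \<Rightarrow> real" and a p x y :: real
  assumes "cond1 f" and "cond2a f" and "a > 0" and "p > 0"
  shows "(\<forall>n. set_integrable (lborel \<Otimes>\<^sub>M lborel) ({0..} \<times> {0..2*pi})
              (\<lambda>(r, \<phi>). series_term f p x y n r \<phi>))
    \<and> (\<forall>r\<ge>0. \<forall>\<phi>\<in>{0..2*pi}. summable (\<lambda>n. series_term f p x y n r \<phi>))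
    \<and> set_integrable (lborel \<Otimes>\<^sub>M lborel) ({0..} \<times> {0..2*pi})
              (\<lambda>(r, \<phi>). \<Sum>n. series_term f p x y n r \<phi>)
    \<and> (\<lambda>n. a * exp (- p * (x\<^sup>2 + y\<^sup>2)) * iter_int (series_term f p x y n))
        sums (a * exp (- p * (x\<^sup>2 + y\<^sup>2)) * iter_int (\<lambda>r \<phi>. \<Sum>n. series_term f p x y n r \<phi>))"
proof -
  from assms(1) obtain F where F: "\<forall>r\<ge>0. 0 \<le> f r \<and> f r \<le> F"
    and fint: "set_integrable lborel {0..} (\<lambda>r. f r * r)" unfolding cond1_def by blast
  have F0: "0 \<le> F" using F by force
  define K where "K = \<bar>x\<bar> + \<bar>y\<bar>"
  define M where "M = F * exp ((2*p*K+2)\<^sup>2/(4*p))"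
  have M0: "0 \<le> M" unfolding M_def using F0 by simp
  define T where "T = (\<lambda>r \<phi>. 2*p*r*(x * cos \<phi> + y * sin \<phi>))"
  define g0 where "g0 = (\<lambda>r::real. indicator {0..} r * (f r * r))"
  have g0m[measurable]: "g0 \<in> borel_measurable borel"
    using borel_measurable_integrable[OF fint[unfolded set_integrable_def]] unfolding g0_def by simp
  have T_bound: "\<bar>T r \<phi>\<bar> \<le> 2*p*K*r" if "r \<ge> 0" for r \<phi>
  proof -
    have "\<bar>x * cos \<phi>\<bar> \<le> \<bar>x\<bar>" by (simp add: abs_mult mult_left_le)
    moreover have "\<bar>y * sin \<phi>\<bar> \<le> \<bar>y\<bar>" by (simp add: abs_mult mult_left_le)
    ultimately have "\<bar>x * cos \<phi> + y * sin \<phi>\<bar> \<le> K" unfolding K_def by linarith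
    hence "(2*p*r) * \<bar>x * cos \<phi> + y * sin \<phi>\<bar> \<le> (2*p*r) * K"
      using that assms(4) by (intro mult_left_mono) auto
    thus ?thesis unfolding T_def using that assms(4) by (simp add: abs_mult mult.commute)
  qed
  have expser: "(\<lambda>n. t^n / fact n) sums exp t" for t :: real
    using exp_converges[of t] by (simp add: scaleR_conv_of_real divide_inverse mult.commute)
  have sums_pt: "(\<lambda>n. series_term f p x y n r \<phi>) sums (f r * exp (-p*r\<^sup>2) * r * exp (T r \<phi>))" for r \<phi>
    unfolding term_eq T_def using sums_mult[OF expser] by simp
  have absbound: "(\<Sum>n\<in>I. \<bar>series_term f p x y n r \<phi>\<bar>) \<le> M * exp (-r)" if "r \<ge> 0" "finite I" for I r \<phi>
  proof -
    have fr: "0 \<le> f r" "f r \<le> F" using F that by auto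
    have "(\<Sum>n\<in>I. \<bar>series_term f p x y n r \<phi>\<bar>) = f r * exp (-p*r\<^sup>2) * r * (\<Sum>n\<in>I. \<bar>T r \<phi>\<bar>^n / fact n)"
      unfolding term_eq T_def using fr that by (simp add: abs_mult power_abs sum_distrib_left)
    also have "\<dots> \<le> f r * exp (-p*r\<^sup>2) * r * exp \<bar>T r \<phi>\<bar>"
      using fr that by (intro mult_left_mono sum_le_suminf[OF sums_summable[OF expser], THEN order_trans]
          sums_unique[OF expser, THEN sym, THEN eq_refl]) auto
    also have "\<dots> \<le> M * exp (-r)" unfolding M_def using core[OF assms(4) that(1) fr T_bound[OF that(1)]] .
    finally show ?thesis .
  qed
  have sumbound: "\<bar>f r * exp (-p*r\<^sup>2) * r * exp (T r \<phi>)\<bar> \<le> M * exp (-r)" if "r \<ge> 0" for r \<phi>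
  proof -
    have fr: "0 \<le> f r" "f r \<le> F" using F that by auto
    have "\<bar>f r * exp (-p*r\<^sup>2) * r * exp (T r \<phi>)\<bar> = f r * exp (-p*r\<^sup>2) * r * exp (T r \<phi>)"
      using fr that by simp
    also have "\<dots> \<le> f r * exp (-p*r\<^sup>2) * r * exp \<bar>T r \<phi>\<bar>"
      using fr that by (intro mult_left_mono) auto
    also have "\<dots> \<le> M * exp (-r)" unfolding M_def using core[OF assms(4) that(1) fr T_bound[OF that(1)]] .
    finally show ?thesis .
  qed
  define I where "I = (\<lambda>z::real\<times>real. indicator {0..} (fst z) * indicator {0..2*pi} (snd z) :: real)"
  define h where "h = (\<lambda>n z. I z * series_term f p x y n (fst z) (snd z))"
  define H where "H = (\<lambda>z. I z * (\<Sum>n. series_term f p x y n (fst z) (snd z)))"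
  define W where "W = (\<lambda>z. I z * (M * exp (- fst z)))"
  have h_eq: "h n = (\<lambda>z. g0 (fst z) * indicator {0..2*pi} (snd z) * exp (-p*(fst z)\<^sup>2)
      * ((2*p*(fst z)*(x * cos (snd z) + y * sin (snd z)))^n / fact n))" for n
    unfolding h_def I_def g0_def term_eq by (auto simp: fun_eq_iff split: split_indicator)
  have hm[measurable]: "h n \<in> borel_measurable (lborel \<Otimes>\<^sub>M lborel)" for n
    unfolding h_eq by measurable
  have H_eq: "H = (\<lambda>z. g0 (fst z) * indicator {0..2*pi} (snd z) * exp (-p*(fst z)\<^sup>2)
      * exp (2*p*(fst z)*(x * cos (snd z) + y * sin (snd z))))"
    unfolding H_def I_def g0_def sums_unique[OF sums_pt, symmetric] T_def
    by (auto simp: fun_eq_iff split: split_indicator)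
  have Hm[measurable]: "H \<in> borel_measurable (lborel \<Otimes>\<^sub>M lborel)"
    unfolding H_eq by measurable
  have Wm[measurable]: "W \<in> borel_measurable (lborel \<Otimes>\<^sub>M lborel)"
    unfolding W_def I_def by measurable
  have Wint: "integrable (lborel \<Otimes>\<^sub>M lborel) W"
  proof (rule lborel_pair.Fubini_integrable)
    have eq: "(\<integral>\<phi>. norm (W (r, \<phi>)) \<partial>lborel) = (2*pi*M) * (r^0 * exp (-r) * indicator {0..} r)" for r
    proof -
      have "(\<lambda>\<phi>. norm (W (r, \<phi>))) = (\<lambda>\<phi>. (M * exp (-r) * indicator {0..} r) * indicator {0..2*pi} \<phi>)"
        unfolding W_def I_def using M0 by (auto simp: fun_eq_iff split: split_indicator)
      then show ?thesis by simp
    qed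
    show "integrable lborel (\<lambda>r. \<integral>\<phi>. norm (W (r, \<phi>)) \<partial>lborel)"
      unfolding eq using integrable.intros[OF has_bochner_integral_I0i_power_exp_m'[of 0]]
      by (intro integrable_mult_right)
    show "AE r in lborel. integrable lborel (\<lambda>\<phi>. W (r, \<phi>))"
    proof (intro AE_I2)
      fix r
      have "(\<lambda>\<phi>. W (r, \<phi>)) = (\<lambda>\<phi>. (M * exp (-r) * indicator {0..} r) * indicator {0..2*pi} \<phi>)"
        unfolding W_def I_def by (auto simp: fun_eq_iff split: split_indicator)
      then show "integrable lborel (\<lambda>\<phi>. W (r, \<phi>))"
        by (simp add: integrable_indicator_iff)
    qed
  qed (fact Wm)
  have hbound: "norm (h n z) \<le> W z" for n z
  proof (cases "fst z \<ge> 0 \<and> snd z \<in> {0..2*pi}")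
    case True
    then show ?thesis using absbound[of "fst z" "{n}" "snd z"]
      by (simp add: h_def W_def I_def)
  next
    case False
    then show ?thesis by (auto simp: h_def W_def I_def split: split_indicator)
  qed
  have hint: "integrable (lborel \<Otimes>\<^sub>M lborel) (h n)" for n
    by (rule Bochner_Integration.integrable_bound[OF Wint hm]) (use hbound M0 in \<open>auto simp: W_def I_def\<close>)
  have psbound: "norm (\<Sum>n<N. h n z) \<le> W z" for N z
  proof (cases "fst z \<ge> 0 \<and> snd z \<in> {0..2*pi}")
    case True
    have "norm (\<Sum>n<N. h n z) \<le> (\<Sum>n<N. \<bar>series_term f p x y n (fst z) (snd z)\<bar>)"
      using True by (simp add: h_def I_def sum_abs)
    also have "\<dots> \<le> W z" using True absbound[of "fst z" "{..<N}" "snd z"] by (simp add: W_def I_def)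
    finally show ?thesis .
  next
    case False
    then show ?thesis by (auto simp: h_def W_def I_def split: split_indicator)
  qed
  have lim: "(\<lambda>N. \<Sum>n<N. h n z) \<longlonglongrightarrow> H z" for z
    using sums_mult[OF sums_pt[of "fst z" "snd z"], of "I z"] sums_unique[OF sums_pt[of "fst z" "snd z"]]
    unfolding sums_def h_def H_def by (simp add: sum_distrib_left)
  have Hint: "integrable (lborel \<Otimes>\<^sub>M lborel) H"
    by (rule integrable_dominated_convergence[where s="\<lambda>N z. \<Sum>n<N. h n z", OF Hm _ Wint]) (use psbound lim in auto)
  have Hlim: "(\<lambda>N. integral\<^sup>L (lborel \<Otimes>\<^sub>M lborel) (\<lambda>z. \<Sum>n<N. h n z)) \<longlonglongrightarrow> integral\<^sup>L (lborel \<Otimes>\<^sub>M lborel) H"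
    by (rule integral_dominated_convergence[where s="\<lambda>N z. \<Sum>n<N. h n z", OF Hm _ Wint]) (use psbound lim in auto)
  have it_h: "iter_int (series_term f p x y n) = integral\<^sup>L (lborel \<Otimes>\<^sub>M lborel) (h n)" for n
    using iter_int_eq[of "series_term f p x y n"] hint[of n] unfolding h_def I_def by simp
  have it_H: "iter_int (\<lambda>r \<phi>. \<Sum>n. series_term f p x y n r \<phi>) = integral\<^sup>L (lborel \<Otimes>\<^sub>M lborel) H"
    using iter_int_eq[of "\<lambda>r \<phi>. \<Sum>n. series_term f p x y n r \<phi>"] Hint unfolding H_def I_def by simp
  have sumsI: "(\<lambda>n. iter_int (series_term f p x y n)) sums iter_int (\<lambda>r \<phi>. \<Sum>n. series_term f p x y n r \<phi>)"
    unfolding sums_def it_h it_H using Hlim by (simp add: integral_sum hint)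
  have P1: "set_integrable (lborel \<Otimes>\<^sub>M lborel) ({0..} \<times> {0..2*pi}) (\<lambda>(r, \<phi>). series_term f p x y n r \<phi>)" for n
    using hint[of n] unfolding set_integrable_def h_def I_def by (simp add: indicator_times case_prod_beta)
  have P3: "set_integrable (lborel \<Otimes>\<^sub>M lborel) ({0..} \<times> {0..2*pi}) (\<lambda>(r, \<phi>). \<Sum>n. series_term f p x y n r \<phi>)"
    using Hint unfolding set_integrable_def H_def I_def by (simp add: indicator_times case_prod_beta)
  show ?thesis
    using P1 P3 sums_mult[OF sumsI, of "a * exp (- p * (x\<^sup>2 + y\<^sup>2))"] sums_summable[OF sums_pt]
    by auto
qed

end
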